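(* Assume $\alpha>\beta+1$, $\beta\ge0$, $\theta>0$, and $\alpha-\beta-1\ge4\theta(\beta+1)$. Let $\rho\in\mathbb R$, let $u(\cdot,\rho)$ be the solution on $[0,\infty)$ of $L(u)+e^{u}=0$, $u(0)=\rho$, $u'(0)=0$, and let $u^*(r)=\ln\{\theta^{\beta+1}(\alpha-\beta-1)\}-\theta\ln r$. Then $u(r,\rho)\neq u^*(r)$ for all $r>0$.
   Context: $L(u)(r)=r^{-\gamma}(r^{\alpha}|u'(r)|^{\beta}u'(r))'$ and $\theta=\gamma+2+\beta-\alpha$. For the $k$-Hessian ($\alpha=d-k$, $\beta=k-1$, $\gamma=d-1$) the condition reads $d\ge 2k+8k^2$. *)

theory Defs
  imports Complex_Main
begin

text \<open>Radial quasilinear operator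
  L(u)(r) = r^(-gamma) (r^alpha |u'(r)|^beta u'(r))'.
  A (classical) solution on [0,oo) of L(u) + e^u = 0 with u(0) = rho, u'(0) = 0:
  u is differentiable on [0,oo) (one-sided at 0) with derivative du, du 0 = 0,
  u 0 = rho, and for every r > 0 the flux r^alpha |du r|^beta du r is differentiable
  with derivative -r^gamma e^(u r), i.e. L(u)(r) + e^(u r) = 0.\<close>

definition flux :: "real \<Rightarrow> real \<Rightarrow> (real \<Rightarrow> real) \<Rightarrow> real \<Rightarrow> real" where
  "flux \<alpha> \<beta> du r = r powr \<alpha> * (\<bar>du r\<bar> powr \<beta> * du r)"

definition is_solution :: "real \<Rightarrow> real \<Rightarrow> real \<Rightarrow> real \<Rightarrow> (real \<Rightarrow> real) \<Rightarrow> bool" where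
  "is_solution \<alpha> \<beta> \<gamma> \<rho> u \<longleftrightarrow>
     (\<exists>du. (\<forall>r\<ge>0. (u has_real_derivative du r) (at r within {0..}))
        \<and> u 0 = \<rho> \<and> du 0 = 0
        \<and> (\<forall>r>0. (flux \<alpha> \<beta> du has_real_derivative (- (r powr \<gamma>) * exp (u r))) (at r)))"

end

theory Submission
  imports Defs "HOL-Analysis.Analysis"
begin

lemma flux_neg:
  fixes \<alpha> \<beta> \<gamma> :: real and u du :: "real \<Rightarrow> real"
  assumes h1: "\<alpha> > \<beta> + 1" and h2: "\<beta> \<ge> 0"
    and d0: "\<forall>r\<ge>0. (u has_real_derivative du r) (at r within {0..})"
    and dF: "\<forall>r>0. (flux \<alpha> \<beta> du has_real_derivative (- (r powr \<gamma>) * exp (u r))) (at r)"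
    and r0: "r0 > 0"
  shows "flux \<alpha> \<beta> du r0 < 0"
proof (rule ccontr)
  assume "\<not> flux \<alpha> \<beta> du r0 < 0"
  hence F0: "flux \<alpha> \<beta> du r0 \<ge> 0" by simp
  define F where "F = flux \<alpha> \<beta> du"
  define q where "q = \<beta> + 1"
  have q: "q \<ge> 1" using h2 q_def by simp
  have dec: "F b < F a" if "0 < a" "a < b" for a b
  proof (rule DERIV_neg_imp_decreasing[OF that(2)])
    fix x assume x: "a \<le> x" "x \<le> b"
    show "\<exists>y. DERIV F x :> y \<and> y < 0"
      using dF x that by (intro exI[of _ "- (x powr \<gamma>) * exp (u x)"]) (auto simp: F_def)
  qed
  define \<delta> where "\<delta> = F (r0/2)"
  have \<delta>: "\<delta> > 0" using dec[of "r0/2" r0] r0 F0 by (simp add: \<delta>_def F_def)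
  have Fge: "F s \<ge> \<delta>" if "0 < s" "s \<le> r0/2" for s
    using dec[of s "r0/2"] that by (cases "s = r0/2") (auto simp: \<delta>_def)
  have dupos: "du s \<ge> \<delta> powr (1/q) * s powr (-\<alpha>/q)" if s: "0 < s" "s \<le> r0/2" for s
  proof -
    have Fs: "s powr \<alpha> * (\<bar>du s\<bar> powr \<beta> * du s) \<ge> \<delta>"
      using Fge[OF s] by (simp add: F_def flux_def)
    have "du s > 0"
    proof (rule ccontr)
      assume "\<not> du s > 0"
      hence "\<bar>du s\<bar> powr \<beta> * du s \<le> 0" by (simp add: mult_nonneg_nonpos)
      hence "s powr \<alpha> * (\<bar>du s\<bar> powr \<beta> * du s) \<le> 0" by (simp add: mult_nonneg_nonpos)
      thus False using Fs \<delta> by linarith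
    qed
    hence eq: "\<bar>du s\<bar> powr \<beta> * du s = du s powr q"
      by (simp add: q_def powr_add)
    have sp: "s powr \<alpha> > 0" using s by simp
    have Fs2: "s powr \<alpha> * du s powr q \<ge> \<delta>" using Fs unfolding eq .
    have "du s powr q \<ge> \<delta> * s powr (-\<alpha>)"
      using Fs2 sp by (simp add: powr_minus field_simps)
    hence "(du s powr q) powr (1/q) \<ge> (\<delta> * s powr (-\<alpha>)) powr (1/q)"
      using \<delta> s q by (intro powr_mono2) auto
    also have "(du s powr q) powr (1/q) = du s"
      using \<open>du s > 0\<close> q by (simp add: powr_powr)
    also have "(\<delta> * s powr (-\<alpha>)) powr (1/q) = \<delta> powr (1/q) * s powr (-\<alpha>/q)"
      using \<delta> s by (simp add: powr_mult powr_powr)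
    finally show ?thesis .
  qed
  define K where "K = \<delta> powr (1/q) / 2 * (r0/2) powr (1 - \<alpha>/q)"
  have K: "K > 0" using \<delta> r0 by (simp add: K_def)
  have "(u has_real_derivative du 0) (at 0 within {0..})" using d0 by simp
  hence cont: "continuous (at 0 within {0..}) u"
    by (rule DERIV_continuous)
  then obtain \<eta> where \<eta>: "\<eta> > 0" "\<And>x. x \<in> {0..} \<Longrightarrow> dist x 0 < \<eta> \<Longrightarrow> dist (u x) (u 0) < K/2"
  proof -
    have "K/2 > 0" using K by simp
    then obtain e where "e > 0" "\<forall>x'\<in>{0..}. dist x' 0 < e \<longrightarrow> dist (u x') (u 0) < K/2"
      using cont unfolding continuous_within_eps_delta by blast
    thus ?thesis using that by blast
  qed
  define s where "s = min (\<eta>/2) (r0/2)"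
  have s: "0 < s" "s \<le> r0/2" "s < \<eta>" using \<eta> r0 by (auto simp: s_def)
  have "\<forall>x. s/2 \<le> x \<and> x \<le> s \<longrightarrow> DERIV u x :> du x"
  proof (intro allI impI)
    fix x assume x: "s/2 \<le> x \<and> x \<le> s"
    hence "x > 0" using s by auto
    have "at x within {0..} = at x"
      using \<open>x > 0\<close> by (intro at_within_open_subset[of _ "{0<..}"]) auto
    thus "DERIV u x :> du x" using d0 \<open>x > 0\<close> by (metis less_imp_le)
  qed
  then obtain z where z: "s/2 < z" "z < s" "u s - u (s/2) = (s - s/2) * du z"
    using MVT2[of "s/2" s u du] s by auto
  have sz: "z powr (-\<alpha>/q) \<ge> s powr (-\<alpha>/q)"
    using z s q h1 h2 by (intro powr_mono2') (auto simp: divide_nonneg_nonneg)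
  have d1: "du z \<ge> \<delta> powr (1/q) * z powr (-\<alpha>/q)" using dupos[of z] z s by auto
  have dz: "du z \<ge> \<delta> powr (1/q) * s powr (-\<alpha>/q)"
    using d1 sz by (meson dual_order.trans mult_left_mono powr_ge_zero)
  have b1: "u s - u (s/2) \<ge> s/2 * (\<delta> powr (1/q) * s powr (-\<alpha>/q))"
    using z(3) dz s by (simp add: mult_left_mono)
  have e1: "s/2 * (\<delta> powr (1/q) * s powr (-\<alpha>/q)) = \<delta> powr (1/q) / 2 * s powr (1 - \<alpha>/q)"
  proof -
    have "s powr (1 - \<alpha>/q) = s powr 1 * s powr (-\<alpha>/q)"
      using powr_add[of s 1 "-\<alpha>/q"] by simp
    also have "\<dots> = s * s powr (-\<alpha>/q)" using s by simp
    finally have "s powr (1 - \<alpha>/q) = s * s powr (-\<alpha>/q)" .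
    hence "\<delta> powr (1/q) / 2 * s powr (1 - \<alpha>/q) = \<delta> powr (1/q) / 2 * (s * s powr (-\<alpha>/q))"
      by (simp only:)
    thus ?thesis by (simp only: mult_ac times_divide_eq_right times_divide_eq_left)
  qed
  have sr: "s powr (1 - \<alpha>/q) \<ge> (r0/2) powr (1 - \<alpha>/q)"
  proof (rule powr_mono2')
    have "\<alpha>/q \<ge> 1" using h1 q by (simp add: q_def)
    thus "1 - \<alpha>/q \<le> 0" by simp
  qed (use s in auto)
  have b2: "\<delta> powr (1/q) / 2 * s powr (1 - \<alpha>/q) \<ge> K"
    unfolding K_def using sr by (simp add: mult_left_mono)
  have big: "u s - u (s/2) \<ge> K" using b1 e1 b2 by linarith
  have "dist (u s) (u 0) < K/2" "dist (u (s/2)) (u 0) < K/2"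
    using \<eta>(2)[of s] \<eta>(2)[of "s/2"] s by auto
  thus False using big unfolding dist_real_def by arith
qed

lemma exp_strict: "x \<noteq> 0 \<Longrightarrow> 1 + x < exp (x::real)"
proof -
  assume x: "x \<noteq> 0"
  show ?thesis
  proof (cases "1 + x/2 \<ge> 0")
    case True
    have "(1 + x/2)^2 \<le> exp (x/2) ^ 2"
      using True exp_ge_add_one_self[of "x/2"] by (intro power_mono) auto
    also have "exp (x/2) ^ 2 = exp x" by (simp add: exp_double[symmetric])
    finally have "(1 + x/2)^2 \<le> exp x" .
    moreover have "1 + x < (1 + x/2)^2" proof -
      have "0 < x * x" using x by (auto simp: zero_less_mult_iff linorder_neq_iff)
      thus ?thesis by (simp add: power2_eq_square algebra_simps)
    qed
    ultimately show ?thesis by linarith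
  next
    case False
    hence "1 + x < 0" by simp
    thus ?thesis using exp_gt_zero[of x] by linarith
  qed
qed

lemma pow_ineq:
  fixes t x q :: real
  assumes t: "t > 0" and x: "x > 0" and q: "q \<ge> 1"
  shows "\<bar>t - x\<bar> \<le> t powr (1 - q) * \<bar>x powr q - t powr q\<bar>"
proof -
  define p where "p = q - 1"
  have p: "p \<ge> 0" using q p_def by simp
  have xq: "x powr q = x powr p * x" using x powr_add[of x p 1] by (simp add: p_def)
  have tq: "t powr q = t powr p * t" using t powr_add[of t p 1] by (simp add: p_def)
  have tt: "t powr (1 - q) * t powr p = 1"
    using t by (simp add: p_def powr_add[symmetric])
  show ?thesis
  proof (cases "x \<ge> t")
    case True
    have "x powr p \<ge> t powr p" using True t p by (intro powr_mono2) auto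
    hence "x powr q - t powr q \<ge> t powr p * (x - t)"
      unfolding xq tq using x by (simp add: algebra_simps mult_right_mono)
    hence "t powr (1 - q) * (x powr q - t powr q) \<ge> t powr (1 - q) * (t powr p * (x - t))"
      by (simp add: mult_left_mono)
    also have "t powr (1 - q) * (t powr p * (x - t)) = x - t" using tt by (simp add: mult.assoc[symmetric])
    finally have "x - t \<le> t powr (1 - q) * (x powr q - t powr q)" .
    moreover have "x powr q \<ge> t powr q" using True t q by (intro powr_mono2) auto
    ultimately show ?thesis using True by (simp add: abs_if)
  next
    case False
    have "x powr p \<le> t powr p" using False x p by (intro powr_mono2) auto
    hence "t powr q - x powr q \<ge> t powr p * (t - x)"
      unfolding xq tq using x by (simp add: algebra_simps mult_right_mono)
    hence "t powr (1 - q) * (t powr q - x powr q) \<ge> t powr (1 - q) * (t powr p * (t - x))"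
      by (simp add: mult_left_mono)
    also have "t powr (1 - q) * (t powr p * (t - x)) = t - x" using tt by (simp add: mult.assoc[symmetric])
    finally have "t - x \<le> t powr (1 - q) * (t powr q - x powr q)" .
    moreover have "x powr q \<le> t powr q" using False x q by (intro powr_mono2) auto
    moreover have "\<bar>x powr q - t powr q\<bar> = t powr q - x powr q" using calculation(2) by simp
    moreover have "\<bar>t - x\<bar> = t - x" using False by simp
    ultimately show ?thesis by simp
  qed
qed


lemma gron_alg:
  fixes w X m aa B e t :: real
  assumes ht: "\<bar>t\<bar> \<le> m * \<bar>X\<bar>" and m: "m \<ge> 0" and aa: "aa > 0" and B: "B > 0"
    and he: "\<bar>e - 1\<bar> \<le> \<bar>w\<bar>"
  shows "2 * w * t + 2 * aa * X * (B * e - B - X) \<ge> - ((m + aa * B + 2 * aa) * (w^2 + X^2))"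
proof -
  have sq: "2 * \<bar>w\<bar> * \<bar>X\<bar> \<le> w^2 + X^2"
  proof -
    have "0 \<le> (\<bar>w\<bar> - \<bar>X\<bar>)^2" by simp
    thus ?thesis by (simp add: power2_eq_square algebra_simps)
  qed
  have "\<bar>2 * w * t\<bar> = 2 * \<bar>w\<bar> * \<bar>t\<bar>" by (simp add: abs_mult)
  also have "\<dots> \<le> 2 * \<bar>w\<bar> * (m * \<bar>X\<bar>)" using ht by (intro mult_left_mono) auto
  also have "\<dots> = m * (2 * \<bar>w\<bar> * \<bar>X\<bar>)" by simp
  also have "\<dots> \<le> m * (w^2 + X^2)" using sq m by (intro mult_left_mono) auto
  finally have 1: "2 * w * t \<ge> - (m * (w^2 + X^2))" by linarith
  have "\<bar>2 * aa * B * X * (e - 1)\<bar> = 2 * aa * B * (\<bar>X\<bar> * \<bar>e - 1\<bar>)" using aa B by (simp add: abs_mult)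
  also have "\<dots> \<le> 2 * aa * B * (\<bar>X\<bar> * \<bar>w\<bar>)" using he aa B by (intro mult_left_mono) auto
  also have "\<dots> = aa * B * (2 * \<bar>w\<bar> * \<bar>X\<bar>)" by simp
  also have "\<dots> \<le> aa * B * (w^2 + X^2)" using sq aa B by (intro mult_left_mono) auto
  finally have 2: "2 * aa * B * X * (e - 1) \<ge> - (aa * B * (w^2 + X^2))" by linarith
  have 3: "- (2 * aa * X^2) \<ge> - (2 * aa * (w^2 + X^2))" using aa by simp
  have eq: "2 * aa * X * (B * e - B - X) = 2 * aa * B * X * (e - 1) - 2 * aa * X^2"
    by (simp add: power2_eq_square algebra_simps)
  show ?thesis using 1 2 3 unfolding eq by (simp add: algebra_simps)
qed

theorem theorem1p7:
  fixes \<alpha> \<beta> \<gamma> \<theta> \<rho> :: real and u :: "real \<Rightarrow> real"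
  assumes h\<theta>def: "\<theta> = \<gamma> + 2 + \<beta> - \<alpha>"
    and h1: "\<alpha> > \<beta> + 1" and h2: "\<beta> \<ge> 0" and h3: "\<theta> > 0"
    and h4: "\<alpha> - \<beta> - 1 \<ge> 4 * \<theta> * (\<beta> + 1)"
    and hu: "is_solution \<alpha> \<beta> \<gamma> \<rho> u"
  shows "\<forall>r>0. u r \<noteq> ln (\<theta> powr (\<beta> + 1) * (\<alpha> - \<beta> - 1)) - \<theta> * ln r"
proof (intro allI impI notI)
  fix rs assume rs: "rs > 0" and eqs: "u rs = ln (\<theta> powr (\<beta> + 1) * (\<alpha> - \<beta> - 1)) - \<theta> * ln rs"
  obtain du where d0: "\<forall>r\<ge>0. (u has_real_derivative du r) (at r within {0..})"
    and u0: "u 0 = \<rho>"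
    and dF: "\<forall>r>0. (flux \<alpha> \<beta> du has_real_derivative (- (r powr \<gamma>) * exp (u r))) (at r)"
    using hu unfolding is_solution_def by blast
  define q where "q = \<beta> + 1"
  define a where "a = \<alpha> - \<beta> - 1"
  define B where "B = \<theta> powr q"
  define c where "c = ln (B * a)"
  have q: "q \<ge> 1" using h2 by (simp add: q_def)
  have a: "a > 0" using h1 by (simp add: a_def)
  have B: "B > 0" using h3 by (simp add: B_def)
  have a4: "a \<ge> 4 * \<theta>"
  proof -
    have "4 * \<theta> * 1 \<le> 4 * \<theta> * q" using q h3 by (intro mult_left_mono) auto
    thus ?thesis using h4 by (simp add: a_def q_def)
  qed
  have ec: "exp c = B * a" using a B by (simp add: c_def)
  have dU: "DERIV u r :> du r" if "r > 0" for r
  proof -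
    have "at r within {0..} = at r"
      using that by (intro at_within_open_subset[of _ "{0<..}"]) auto
    thus ?thesis using d0 that by (metis less_imp_le)
  qed
  have Fneg: "flux \<alpha> \<beta> du r < 0" if "r > 0" for r
    using flux_neg[OF h1 h2 d0 dF that] .
  have duneg: "du r < 0" if r: "r > 0" for r
  proof (rule ccontr)
    assume "\<not> du r < 0"
    hence "\<bar>du r\<bar> powr \<beta> * du r \<ge> 0" by simp
    hence "flux \<alpha> \<beta> du r \<ge> 0" unfolding flux_def by simp
    thus False using Fneg[OF r] by simp
  qed
  define \<phi> where "\<phi> r = - r * du r" for r
  define \<Phi> where "\<Phi> r = \<phi> r powr q" for r
  define W where "W r = u r + \<theta> * ln r - c" for r
  have \<phi>pos: "\<phi> r > 0" if "r > 0" for r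
    using duneg[OF that] that by (simp add: \<phi>_def mult_pos_neg)
  have \<Phi>pos: "\<Phi> r > 0" if "r > 0" for r using \<phi>pos[OF that] by (simp add: \<Phi>_def)
  have \<Phi>F: "\<Phi> r = - flux \<alpha> \<beta> du r * r powr (- a)" if r: "r > 0" for r
  proof -
    have dur: "du r = - (\<phi> r / r)" using r by (simp add: \<phi>_def)
    have ab: "\<bar>du r\<bar> = \<phi> r / r" using dur \<phi>pos[OF r] r by simp
    have "\<bar>du r\<bar> powr \<beta> * du r = - ((\<phi> r / r) powr \<beta> * (\<phi> r / r))" using ab dur by simp
    also have "(\<phi> r / r) powr \<beta> * (\<phi> r / r) = (\<phi> r / r) powr q"
      using \<phi>pos[OF r] r powr_add[of "\<phi> r / r" \<beta> 1] by (simp add: q_def)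
    also have "\<dots> = \<Phi> r / r powr q" by (simp add: \<Phi>_def powr_divide \<phi>pos[OF r, THEN less_imp_le] r less_imp_le)
    finally have "flux \<alpha> \<beta> du r = - (r powr \<alpha> * \<Phi> r / r powr q)" by (simp add: flux_def)
    hence "- flux \<alpha> \<beta> du r * r powr (- a) = \<Phi> r * (r powr \<alpha> * r powr (- a) / r powr q)" by simp
    also have "r powr \<alpha> * r powr (- a) / r powr q = 1"
      using r by (simp add: powr_add[symmetric] powr_diff[symmetric] a_def q_def)
    finally show ?thesis by simp
  qed
  have d\<Phi>: "DERIV \<Phi> r :> a * (B * exp (W r) - \<Phi> r) / r" if r: "r > 0" for r
  proof -
    have D1: "DERIV (\<lambda>x. - flux \<alpha> \<beta> du x * x powr (- a)) r :>
        (- (- (r powr \<gamma>) * exp (u r))) * r powr (- a) + (- flux \<alpha> \<beta> du r) * ((- a) * r powr (- a - 1))"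
    proof -
      have f1: "DERIV (flux \<alpha> \<beta> du) r :> (- (r powr \<gamma>) * exp (u r))" using dF r by blast
      show ?thesis using DERIV_mult[OF DERIV_minus[OF f1] has_real_derivative_powr[OF r, of "- a"]] by (simp add: mult_ac)
    qed
    have D2: "DERIV \<Phi> r :>
        (- (- (r powr \<gamma>) * exp (u r))) * r powr (- a) + (- flux \<alpha> \<beta> du r) * ((- a) * r powr (- a - 1))"
      by (rule has_field_derivative_transform_within_open[OF D1, of "{0<..}"]) (use r \<Phi>F in auto)
    have eu: "exp (u r) = exp (W r) * (B * a) * r powr (- \<theta>)"
    proof -
      have "u r = W r + c + (- \<theta>) * ln r" by (simp add: W_def)
      hence "exp (u r) = exp (W r) * exp c * exp ((- \<theta>) * ln r)" by (simp only: exp_add)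
      thus ?thesis using ec r by (simp add: powr_def)
    qed
    have p1: "r powr \<gamma> * r powr (- \<theta>) * r powr (- a) = 1 / r"
    proof -
      have "r powr \<gamma> * r powr (- \<theta>) * r powr (- a) = r powr (\<gamma> + (- \<theta>) + (- a))"
        by (simp only: powr_add)
      also have "\<gamma> + (- \<theta>) + (- a) = -1" by (simp add: h\<theta>def a_def)
      finally show ?thesis using r by (simp add: powr_minus divide_inverse)
    qed
    have p2: "r powr (- a - 1) = r powr (- a) / r"
      using r by (simp add: powr_diff)
    have "(- (- (r powr \<gamma>) * exp (u r))) * r powr (- a) + (- flux \<alpha> \<beta> du r) * ((- a) * r powr (- a - 1))
        = exp (W r) * (B * a) * (r powr \<gamma> * r powr (- \<theta>) * r powr (- a))
          - a * ((- flux \<alpha> \<beta> du r) * r powr (- a)) / r"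
      unfolding eu p2 by (simp add: algebra_simps)
    also have "\<dots> = a * (B * exp (W r) - \<Phi> r) / r"
      unfolding p1 \<Phi>F[OF r, symmetric] using r by (simp add: field_simps)
    finally show ?thesis using D2 by simp
  qed
  have dW: "DERIV W r :> (\<theta> - \<phi> r) / r" if r: "r > 0" for r
  proof -
    have "DERIV W r :> du r + \<theta> * (1 / r) - 0"
      unfolding W_def[abs_def] using r dU[OF r]
      by (intro derivative_intros DERIV_cmult) (auto intro!: derivative_eq_intros)
    thus ?thesis using r by (simp add: \<phi>_def field_simps)
  qed
  have key: "\<bar>\<theta> - \<phi> r\<bar> \<le> \<theta> powr (1 - q) * \<bar>\<Phi> r - B\<bar>" if r: "r > 0" for r
    unfolding \<Phi>_def B_def using pow_ineq[OF h3 \<phi>pos[OF r] q] .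
  have tB: "\<theta> powr (1 - q) * B = \<theta>"
    using h3 by (simp add: B_def powr_add[symmetric])
  have Ws: "W rs = 0" using eqs by (simp add: W_def c_def B_def q_def a_def)
  have contW: "continuous_on {x..y} W" if "0 < x" for x y
  proof (rule DERIV_atLeastAtMost_imp_continuous_on)
    fix z assume "x \<le> z" "z \<le> y"
    hence "z > 0" using that by simp
    thus "\<exists>y. DERIV W z :> y" using dW by blast
  qed
  have cont\<Phi>: "continuous_on {x..y} \<Phi>" if "0 < x" for x y
  proof (rule DERIV_atLeastAtMost_imp_continuous_on)
    fix z assume "x \<le> z" "z \<le> y"
    hence "z > 0" using that by simp
    thus "\<exists>y. DERIV \<Phi> z :> y" using d\<Phi> by blast
  qed
  have "(u has_real_derivative du 0) (at 0 within {0..})" using d0 by simp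
  hence cont: "continuous (at 0 within {0..}) u" by (rule DERIV_continuous)
  obtain \<eta> where \<eta>: "\<eta> > 0" "\<And>x. x \<in> {0..} \<Longrightarrow> dist x 0 < \<eta> \<Longrightarrow> dist (u x) (u 0) < 1"
  proof -
    obtain e where "e > 0" "\<forall>x'\<in>{0..}. dist x' 0 < e \<longrightarrow> dist (u x') (u 0) < 1"
      using cont unfolding continuous_within_eps_delta by (meson zero_less_one)
    thus ?thesis using that by blast
  qed
  define \<delta> where "\<delta> = min (\<eta>/2) (exp ((c - \<rho> - 2) / \<theta>))"
  have \<delta>: "\<delta> > 0" using \<eta> by (simp add: \<delta>_def)
  have Wlow: "W r < -1" if r: "0 < r" "r \<le> \<delta>" for r
  proof -
    have "dist (u r) (u 0) < 1" using \<eta>(2)[of r] r \<eta> by (simp add: \<delta>_def dist_real_def)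
    hence ur: "u r < \<rho> + 1" using u0 by (simp add: dist_real_def)
    have "ln r \<le> ln (exp ((c - \<rho> - 2) / \<theta>))"
      using r by (subst ln_le_cancel_iff) (auto simp: \<delta>_def)
    hence "ln r \<le> (c - \<rho> - 2) / \<theta>" by simp
    hence "\<theta> * ln r \<le> c - \<rho> - 2" using h3 by (simp add: field_simps)
    thus ?thesis using ur by (simp add: W_def)
  qed
  have \<delta>rs: "\<delta> < rs"
  proof (rule ccontr)
    assume "\<not> \<delta> < rs" thus False using Wlow[of rs] rs Ws by simp
  qed
  define Z where "Z = {x \<in> {\<delta>..rs}. W x = 0}"
  have "closed Z" unfolding Z_def
    by (rule continuous_closed_preimage_constant[OF contW[OF \<delta>] closed_atLeastAtMost])
  hence "compact ({\<delta>..rs} \<inter> Z)" by (intro compact_Int_closed) auto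
  moreover have "{\<delta>..rs} \<inter> Z = Z" unfolding Z_def by blast
  ultimately have "compact Z" by simp
  moreover have "rs \<in> Z" using Ws \<delta>rs unfolding Z_def by simp
  hence "Z \<noteq> {}" by blast
  ultimately have "\<exists>s\<in>Z. \<forall>t\<in>Z. s \<le> t" by (rule compact_attains_inf)
  then obtain r1 where r1Z: "r1 \<in> Z" and r1min: "\<And>t. t \<in> Z \<Longrightarrow> r1 \<le> t"
    by blast
  have Wr1: "W r1 = 0" and r1b: "\<delta> \<le> r1" "r1 \<le> rs" using r1Z unfolding Z_def by auto
  have \<delta>r1: "\<delta> < r1"
  proof (rule ccontr)
    assume "\<not> \<delta> < r1"
    hence "r1 = \<delta>" using r1b by simp
    thus False using Wlow[OF \<delta> order_refl] Wr1 by simp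
  qed
  have r1pos: "r1 > 0" using \<delta> \<delta>r1 by simp
  have Wneg: "W r < 0" if r: "0 < r" "r < r1" for r
  proof (cases "r \<le> \<delta>")
    case True thus ?thesis using Wlow r by force
  next
    case False
    show ?thesis
    proof (rule ccontr)
      assume "\<not> W r < 0"
      hence "W \<delta> \<le> 0" "0 \<le> W r" using Wlow[OF \<delta>] by auto
      then obtain x where x: "\<delta> \<le> x" "x \<le> r" "W x = 0"
        using IVT'[of W \<delta> 0 r] contW[OF \<delta>] False by auto
      hence "x \<in> Z" using r r1b by (auto simp: Z_def)
      thus False using r1min x r by fastforce
    qed
  qed
  have \<Phi>r1: "\<Phi> r1 \<le> B"
  proof (rule ccontr)
    assume "\<not> \<Phi> r1 \<le> B"
    hence "\<phi> r1 > \<theta>"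
    proof -
      assume h: "\<not> \<Phi> r1 \<le> B"
      show ?thesis
      proof (rule ccontr)
        assume "\<not> \<phi> r1 > \<theta>"
        hence "\<Phi> r1 \<le> B" unfolding \<Phi>_def B_def using \<phi>pos[OF r1pos] q by (intro powr_mono2) auto
        thus False using h by simp
      qed
    qed
    hence "(\<theta> - \<phi> r1) / r1 < 0" using r1pos by (simp add: divide_neg_pos)
    then obtain d where d: "d > 0" "\<And>h. h > 0 \<Longrightarrow> h < d \<Longrightarrow> W r1 < W (r1 - h)"
      using DERIV_neg_dec_left[OF dW[OF r1pos]] by blast
    define h where "h = min (d/2) (r1/2)"
    have "W r1 < W (r1 - h)" using d r1pos by (intro d(2)) (auto simp: h_def)
    moreover have "W (r1 - h) < 0" using d r1pos by (intro Wneg) (auto simp: h_def)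
    ultimately show False using Wr1 by simp
  qed
  show False
  proof (cases "\<Phi> r1 < B")
    case True
    define G where "G x = \<Phi> x - B - 2 * B * W x" for x
    have contG: "continuous_on {\<delta>..r1} G"
      unfolding G_def using cont\<Phi>[OF \<delta>] contW[OF \<delta>]
      by (intro continuous_intros) auto
    have G\<delta>: "G \<delta> > 0"
    proof -
      have "\<Phi> \<delta> > 0" using \<Phi>pos[OF \<delta>] .
      moreover have "B * W \<delta> < B * (-1)" using Wlow[OF \<delta> order_refl] B by (intro mult_strict_left_mono) auto
      ultimately show ?thesis using B by (simp add: G_def)
    qed
    have Gr1: "G r1 < 0" using True Wr1 by (simp add: G_def)
    define Z2 where "Z2 = {x \<in> {\<delta>..r1}. G x = 0}"
    have "closed Z2" unfolding Z2_def
      by (rule continuous_closed_preimage_constant[OF contG closed_atLeastAtMost])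
    hence "compact ({\<delta>..r1} \<inter> Z2)" by (intro compact_Int_closed) auto
    moreover have "{\<delta>..r1} \<inter> Z2 = Z2" unfolding Z2_def by blast
    ultimately have "compact Z2" by simp
    moreover obtain y where y: "\<delta> \<le> y" "y \<le> r1" "G y = 0"
      using IVT2'[of G r1 0 \<delta>] contG G\<delta> Gr1 \<delta>r1 by auto
    hence "y \<in> Z2" unfolding Z2_def by simp
    hence "Z2 \<noteq> {}" by blast
    ultimately have "\<exists>s\<in>Z2. \<forall>t\<in>Z2. s \<le> t" by (rule compact_attains_inf)
    then obtain r0 where r0Z: "r0 \<in> Z2" and r0min: "\<And>t. t \<in> Z2 \<Longrightarrow> r0 \<le> t"
      by blast
    have Gr0: "G r0 = 0" and r0b: "\<delta> \<le> r0" "r0 \<le> r1" using r0Z unfolding Z2_def by auto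
    have \<delta>r0: "\<delta> < r0"
    proof (rule ccontr)
      assume "\<not> \<delta> < r0"
      hence "r0 = \<delta>" using r0b by simp
      thus False using G\<delta> Gr0 by simp
    qed
    have r0r1: "r0 < r1"
    proof (rule ccontr)
      assume "\<not> r0 < r1"
      hence "r0 = r1" using r0b by simp
      thus False using Gr1 Gr0 by simp
    qed
    have r0pos: "r0 > 0" using \<delta> \<delta>r0 by simp
    have Gpos: "G x > 0" if x: "\<delta> \<le> x" "x < r0" for x
    proof (rule ccontr)
      assume "\<not> G x > 0"
      hence "G x \<le> 0" by simp
      moreover have "continuous_on {\<delta>..x} G"
        by (rule continuous_on_subset[OF contG]) (use x r0b in auto)
      ultimately obtain z where z: "\<delta> \<le> z" "z \<le> x" "G z = 0"
        using IVT2'[of G x 0 \<delta>] G\<delta> x by auto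
      hence "z \<in> Z2" using x r0b unfolding Z2_def by simp
      thus False using r0min z x by fastforce
    qed
    define w where "w = W r0"
    have w: "w < 0" using Wneg[OF r0pos r0r1] by (simp add: w_def)
    have \<Phi>r0: "\<Phi> r0 = B + 2 * B * w" using Gr0 by (simp add: G_def w_def)
    have dG: "DERIV G r0 :> a * (B * exp (W r0) - \<Phi> r0) / r0 - 2 * B * ((\<theta> - \<phi> r0) / r0)"
      unfolding G_def[abs_def]
      using DERIV_diff[OF DERIV_diff[OF d\<Phi>[OF r0pos] DERIV_const[of B]] DERIV_cmult[OF dW[OF r0pos], of "2 * B"]]
      by simp
    have t1: "\<theta> - \<phi> r0 \<le> 2 * \<theta> * (- w)"
    proof -
      have "\<theta> - \<phi> r0 \<le> \<theta> powr (1 - q) * \<bar>\<Phi> r0 - B\<bar>" using key[OF r0pos] by simp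
      also have "\<bar>\<Phi> r0 - B\<bar> = 2 * B * (- w)" using \<Phi>r0 w B by (simp add: abs_if mult_pos_neg)
      also have "\<theta> powr (1 - q) * (2 * B * (- w)) = 2 * (\<theta> powr (1 - q) * B) * (- w)" by simp
      finally show ?thesis unfolding tB .
    qed
    have t2: "B * exp w - B - 2 * B * w > B * (- w)"
    proof -
      have "1 + w < exp w" using exp_strict w by simp
      hence "B * (1 + w) < B * exp w" using B by simp
      thus ?thesis by (simp add: algebra_simps)
    qed
    have num: "a * (B * exp w - \<Phi> r0) - 2 * B * (\<theta> - \<phi> r0) > 0"
    proof -
      have "B * exp w - \<Phi> r0 > B * (- w)" using t2 \<Phi>r0 by simp
      hence "a * (B * exp w - \<Phi> r0) > a * (B * (- w))" using a by (intro mult_strict_left_mono) auto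
      moreover have "2 * B * (\<theta> - \<phi> r0) \<le> 2 * B * (2 * \<theta> * (- w))" using t1 B by (intro mult_left_mono) auto
      moreover have "a * (B * (- w)) \<ge> 4 * \<theta> * (B * (- w))"
        using a4 B w by (intro mult_right_mono) (auto simp: mult_pos_neg less_imp_le)
      ultimately show ?thesis by (simp add: algebra_simps)
    qed
    have "a * (B * exp (W r0) - \<Phi> r0) / r0 - 2 * B * ((\<theta> - \<phi> r0) / r0)
        = (a * (B * exp w - \<Phi> r0) - 2 * B * (\<theta> - \<phi> r0)) / r0"
      using r0pos by (simp add: w_def field_simps)
    hence dpos: "a * (B * exp (W r0) - \<Phi> r0) / r0 - 2 * B * ((\<theta> - \<phi> r0) / r0) > 0"
      using num r0pos by simp
    then obtain d where d: "d > 0" "\<And>h. h > 0 \<Longrightarrow> h < d \<Longrightarrow> G (r0 - h) < G r0"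
      using DERIV_pos_inc_left[OF dG] by blast
    define h where "h = min (d/2) ((r0 - \<delta>)/2)"
    have "G (r0 - h) < G r0" using d \<delta>r0 by (intro d(2)) (auto simp: h_def)
    moreover have "h \<le> (r0 - \<delta>)/2" unfolding h_def by (rule min.cobounded2)
    hence "G (r0 - h) > 0" using d \<delta>r0 by (intro Gpos) (auto simp: h_def)
    ultimately show False using Gr0 by simp
  next
    case False
    hence \<Phi>B: "\<Phi> r1 = B" using \<Phi>r1 by simp
    define r0 where "r0 = r1 / 2"
    have r0: "0 < r0" "r0 < r1" using r1pos by (auto simp: r0_def)
    define m where "m = \<theta> powr (1 - q)"
    have m: "m \<ge> 0" by (simp add: m_def)
    define C where "C = m + a * B + 2 * a"
    have C: "C \<ge> 0" using m a B by (simp add: C_def)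
    define E where "E x = (W x)^2 + (\<Phi> x - B)^2" for x
    define F where "F x = E x * exp (C * x / r0)" for x
    have Fd: "\<exists>y. DERIV F x :> y \<and> y \<ge> 0" if x: "r0 \<le> x" "x \<le> r1" for x
    proof -
      have xpos: "x > 0" using x r0 by simp
      have wx: "W x \<le> 0"
      proof (cases "x = r1")
        case True thus ?thesis using Wr1 by simp
      next
        case False thus ?thesis using Wneg[OF xpos] x by fastforce
      qed
      define E' where "E' = 2 * W x * ((\<theta> - \<phi> x) / x) + 2 * (\<Phi> x - B) * (a * (B * exp (W x) - \<Phi> x) / x)"
      have dE: "DERIV E x :> E'"
        unfolding E_def[abs_def] E'_def
        by (rule DERIV_cong[OF DERIV_add[OF DERIV_power[OF dW[OF xpos], of 2] DERIV_power[OF DERIV_diff[OF d\<Phi>[OF xpos] DERIV_const[of B]], of 2]]])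
           (simp add: algebra_simps)
      have dexp: "DERIV (\<lambda>x. exp (C * x / r0)) x :> exp (C * x / r0) * (C / r0)"
        using r0 by (auto intro!: derivative_eq_intros)
      have dF': "DERIV F x :> E' * exp (C * x / r0) + E x * (exp (C * x / r0) * (C / r0))"
        unfolding F_def[abs_def] by (rule DERIV_mult'[OF dE dexp, THEN DERIV_cong]) (simp add: algebra_simps)
      have he: "\<bar>exp (W x) - 1\<bar> \<le> \<bar>W x\<bar>"
      proof -
        have "exp (W x) \<le> 1" using wx by simp
        moreover have "1 + W x \<le> exp (W x)" by (rule exp_ge_add_one_self)
        ultimately show ?thesis using wx by linarith
      qed
      have xE: "x * E' \<ge> - (C * E x)"
      proof -
        have "x * E' = 2 * W x * (\<theta> - \<phi> x) + 2 * a * (\<Phi> x - B) * (B * exp (W x) - B - (\<Phi> x - B))"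
          using xpos by (simp add: E'_def field_simps)
        also have "\<dots> \<ge> - ((m + a * B + 2 * a) * ((W x)^2 + (\<Phi> x - B)^2))"
          by (rule gron_alg[OF _ m a B he]) (use key[OF xpos] in \<open>simp add: m_def\<close>)
        finally show ?thesis by (simp add: C_def E_def)
      qed
      have E0: "E x \<ge> 0" by (simp add: E_def)
      have CE: "C * E x \<ge> 0" using C E0 by simp
      have e1: "E' \<ge> - ((C * E x) / x)"
      proof -
        have "x * E' \<ge> x * (- ((C * E x) / x))" using xE xpos by simp
        thus ?thesis using xpos by (simp only: mult_le_cancel_left_pos)
      qed
      have e2: "(C * E x) / x \<le> (C * E x) / r0"
        using CE xpos x r0 by (intro divide_left_mono) auto
      have e3: "E x * (C / r0) = (C * E x) / r0" by simp
      have "E' + E x * (C / r0) \<ge> 0" using e1 e2 e3 by linarith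
      hence "(E' + E x * (C / r0)) * exp (C * x / r0) \<ge> 0" by simp
      thus ?thesis using dF' by (intro exI[of _ "(E' + E x * (C / r0)) * exp (C * x / r0)"]) (simp add: algebra_simps)
    qed
    have "F r0 \<le> F r1"
    proof (rule DERIV_nonneg_imp_nondecreasing[of r0 r1 F])
      show "r0 \<le> r1" using r0 by simp
      fix x assume "r0 \<le> x" "x \<le> r1"
      thus "\<exists>y. DERIV F x :> y \<and> y \<ge> 0" by (rule Fd)
    qed
    moreover have "F r1 = 0" using Wr1 \<Phi>B by (simp add: F_def E_def)
    moreover have "F r0 > 0"
    proof -
      have "W r0 < 0" using Wneg[OF r0] .
      hence "(W r0)^2 > 0" by simp
      hence "E r0 > 0" unfolding E_def by (simp add: add_pos_nonneg)
      thus ?thesis by (simp add: F_def)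
    qed
    ultimately show False by simp
  qed
qed

end
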